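(* If an $n$-agent network is $k$-redundant and $\bigcap_{i=1}^n\ker A_i=\{0\}$, then for any subset $\mathcal S\subset\mathcal V$ with $|\mathcal S|\ge n-k$, $\bigcap_{i\in\mathcal S}\ker A_i=\{0\}$.
   Context: An $n$-agent network: agents $\mathcal V=\{1,\dots,n\}$, each agent $i$ having real matrices $A_i\in\mathbb R^{r_i\times d}$, $b_i\in\mathbb R^{r_i}$. The network is $k$-redundant ($k\in\{0,1,\dots,n-1\}$) if for any $\mathcal S_1,\mathcal S_2\subset\mathcal V$ with $|\mathcal S_1|=|\mathcal S_2|=n-k$, $\arg\min_x\sum_{i\in\mathcal S_1}\|A_ix-b_i\|_2^2=\arg\min_x\sum_{i\in\mathcal S_2}\|A_ix-b_i\|_2^2$. *)

theory Defs
  imports "HOL-Analysis.Analysis"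
begin

text \<open>Agent i has matrix A_i with r i rows; row j (j < r i) of A_i is the vector
  A i j in R^d (d is the finite index type 'd), and b i j is entry j of b_i.\<close>

definition matvec :: "(nat \<Rightarrow> nat \<Rightarrow> real^'d) \<Rightarrow> nat \<Rightarrow> real^'d \<Rightarrow> nat \<Rightarrow> real" where
  "matvec A i x = (\<lambda>j. A i j \<bullet> x)"

definition agent_cost ::
  "(nat \<Rightarrow> nat) \<Rightarrow> (nat \<Rightarrow> nat \<Rightarrow> real^'d) \<Rightarrow> (nat \<Rightarrow> nat \<Rightarrow> real) \<Rightarrow> nat \<Rightarrow> real^'d \<Rightarrow> real" where
  "agent_cost r A b i x = (\<Sum>j<r i. (matvec A i x j - b i j)^2)"

definition agg_argmin ::
  "(nat \<Rightarrow> nat) \<Rightarrow> (nat \<Rightarrow> nat \<Rightarrow> real^'d) \<Rightarrow> (nat \<Rightarrow> nat \<Rightarrow> real) \<Rightarrow> nat set \<Rightarrow> (real^'d) set" where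
  "agg_argmin r A b S = {x. \<forall>y. (\<Sum>i\<in>S. agent_cost r A b i x) \<le> (\<Sum>i\<in>S. agent_cost r A b i y)}"

definition k_redundant ::
  "nat \<Rightarrow> nat \<Rightarrow> (nat \<Rightarrow> nat) \<Rightarrow> (nat \<Rightarrow> nat \<Rightarrow> real^'d) \<Rightarrow> (nat \<Rightarrow> nat \<Rightarrow> real) \<Rightarrow> bool" where
  "k_redundant n k r A b \<longleftrightarrow>
     (\<forall>S1 S2. S1 \<subseteq> {1..n} \<and> S2 \<subseteq> {1..n} \<and> card S1 = n - k \<and> card S2 = n - k
        \<longrightarrow> agg_argmin r A b S1 = agg_argmin r A b S2)"

definition agent_ker :: "(nat \<Rightarrow> nat) \<Rightarrow> (nat \<Rightarrow> nat \<Rightarrow> real^'d) \<Rightarrow> nat \<Rightarrow> (real^'d) set" where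
  "agent_ker r A i = {x. \<forall>j<r i. matvec A i x j = 0}"

end

theory Submission
  imports Defs
begin

lemma ls_exists:
  fixes a :: "nat \<Rightarrow> nat \<Rightarrow> real^'d" and \<beta> :: "nat \<Rightarrow> nat \<Rightarrow> real" and S :: "nat set"
  assumes fin: "finite S"
  shows "\<exists>x. \<forall>y. (\<Sum>i\<in>S. \<Sum>j<r i. (a i j \<bullet> x - \<beta> i j)^2) \<le> (\<Sum>i\<in>S. \<Sum>j<r i. (a i j \<bullet> y - \<beta> i j)^2)"
proof -
  define M where "M = (\<lambda>x. \<Sum>i\<in>S. \<Sum>j<r i. (a i j \<bullet> x) *\<^sub>R a i j)"
  define c where "c = (\<Sum>i\<in>S. \<Sum>j<r i. \<beta> i j *\<^sub>R a i j)"
  have lin: "linear M"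
    by (rule linearI) (simp_all add: M_def inner_add_right scaleR_add_left sum.distrib scaleR_sum_right)
  have key: "h \<bullet> M x = (\<Sum>i\<in>S. \<Sum>j<r i. (a i j \<bullet> x) * (a i j \<bullet> h))" for x h
    by (simp add: M_def inner_sum_right inner_commute)
  have keyc: "h \<bullet> c = (\<Sum>i\<in>S. \<Sum>j<r i. \<beta> i j * (a i j \<bullet> h))" for h
    by (simp add: c_def inner_sum_right inner_commute)
  have sub: "subspace (range M)"
    using lin subspace_UNIV linear_subspace_image by blast
  obtain y z where y: "y \<in> span (range M)" and z: "\<And>w. w \<in> span (range M) \<Longrightarrow> orthogonal z w"
    and cyz: "c = y + z"
    by (rule orthogonal_subspace_decomp_exists[of "range M" c]) auto
  have "z \<bullet> M z = 0" using z[of "M z"] by (simp add: span_base orthogonal_def)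
  hence "(\<Sum>i\<in>S. \<Sum>j<r i. (a i j \<bullet> z)^2) = 0" by (simp add: key power2_eq_square)
  then have az: "\<forall>i\<in>S. \<forall>j<r i. a i j \<bullet> z = 0"
  proof (intro ballI allI impI)
    fix i j assume i: "i \<in> S" and j: "j < r i"
    assume "(\<Sum>i\<in>S. \<Sum>j<r i. (a i j \<bullet> z)^2) = 0"
    hence "(\<Sum>j<r i. (a i j \<bullet> z)^2) = 0"
      using fin i by (subst (asm) sum_nonneg_eq_0_iff) (auto intro: sum_nonneg)
    hence "(a i j \<bullet> z)^2 = 0" using j by (subst (asm) sum_nonneg_eq_0_iff) auto
    thus "a i j \<bullet> z = 0" by simp
  qed
  have "z \<bullet> c = 0" using az by (simp add: keyc)
  moreover have "z \<bullet> y = 0" using z[OF y] by (simp add: orthogonal_def)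
  ultimately have "z \<bullet> z = 0" using cyz by (simp add: inner_add_right)
  hence "z = 0" by simp
  hence "c \<in> range M" using cyz y sub by (metis add.right_neutral span_eq_iff)
  then obtain x where x: "M x = c" by auto
  show ?thesis
  proof (intro exI allI)
    fix w
    define h where "h = w - x"
    have w: "w = x + h" by (simp add: h_def)
    have "(\<Sum>i\<in>S. \<Sum>j<r i. (a i j \<bullet> w - \<beta> i j)^2) =
      (\<Sum>i\<in>S. \<Sum>j<r i. (a i j \<bullet> x - \<beta> i j)^2) + 2 * (\<Sum>i\<in>S. \<Sum>j<r i. (a i j \<bullet> x - \<beta> i j) * (a i j \<bullet> h))
      + (\<Sum>i\<in>S. \<Sum>j<r i. (a i j \<bullet> h)^2)"
    proof -
      have "(\<Sum>i\<in>S. \<Sum>j<r i. (a i j \<bullet> w - \<beta> i j)^2) = (\<Sum>i\<in>S. \<Sum>j<r i. (a i j \<bullet> x - \<beta> i j)^2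
          + 2 * ((a i j \<bullet> x - \<beta> i j) * (a i j \<bullet> h)) + (a i j \<bullet> h)^2)"
        by (intro sum.cong refl) (simp add: w inner_add_right power2_eq_square algebra_simps)
      also have "\<dots> = (\<Sum>i\<in>S. \<Sum>j<r i. (a i j \<bullet> x - \<beta> i j)^2) + 2 * (\<Sum>i\<in>S. \<Sum>j<r i. (a i j \<bullet> x - \<beta> i j) * (a i j \<bullet> h))
      + (\<Sum>i\<in>S. \<Sum>j<r i. (a i j \<bullet> h)^2)"
        by (simp add: sum.distrib sum_distrib_left)
      finally show ?thesis .
    qed
    moreover have "(\<Sum>i\<in>S. \<Sum>j<r i. (a i j \<bullet> x - \<beta> i j) * (a i j \<bullet> h)) = h \<bullet> M x - h \<bullet> c"
      by (simp add: key keyc left_diff_distrib sum_subtractf)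
    moreover have "(\<Sum>i\<in>S. \<Sum>j<r i. (a i j \<bullet> h)^2) \<ge> 0" by (intro sum_nonneg) auto
    ultimately show "(\<Sum>i\<in>S. \<Sum>j<r i. (a i j \<bullet> x - \<beta> i j)^2) \<le> (\<Sum>i\<in>S. \<Sum>j<r i. (a i j \<bullet> w - \<beta> i j)^2)"
      using x by simp
  qed
qed



lemma cost_eq: "(\<Sum>i\<in>S. agent_cost r A b i x) = (\<Sum>i\<in>S. \<Sum>j<r i. (A i j \<bullet> x - b i j)^2)"
  by (simp add: agent_cost_def matvec_def)

lemma argmin_ex:
  assumes "finite S" shows "\<exists>x. x \<in> agg_argmin r A b S"
  using ls_exists[OF assms, of A b r] by (simp add: agg_argmin_def cost_eq)

lemma shift_in:
  assumes "x \<in> agg_argmin r A b S" and "u \<in> (\<Inter>i\<in>S. agent_ker r A i)"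
  shows "x + u \<in> agg_argmin r A b S"
proof -
  have "(\<Sum>i\<in>S. agent_cost r A b i (x + u)) = (\<Sum>i\<in>S. agent_cost r A b i x)"
  proof (intro sum.cong refl)
    fix i assume i: "i \<in> S"
    hence "\<forall>j<r i. A i j \<bullet> u = 0" using assms(2) by (auto simp: agent_ker_def matvec_def)
    thus "agent_cost r A b i (x + u) = agent_cost r A b i x"
      by (auto simp: agent_cost_def matvec_def inner_add_right intro!: sum.cong)
  qed
  thus ?thesis using assms(1) by (simp add: agg_argmin_def)
qed

lemma shift_out:
  assumes fin: "finite S" and x: "x \<in> agg_argmin r A b S" and xu: "x + u \<in> agg_argmin r A b S"
  shows "u \<in> (\<Inter>i\<in>S. agent_ker r A i)"
proof -
  define F where "F = (\<lambda>y. \<Sum>i\<in>S. \<Sum>j<r i. (A i j \<bullet> y - b i j)^2)"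
  define \<alpha> where "\<alpha> = (\<Sum>i\<in>S. \<Sum>j<r i. (A i j \<bullet> u)^2)"
  define \<beta> where "\<beta> = (\<Sum>i\<in>S. \<Sum>j<r i. (A i j \<bullet> x - b i j) * (A i j \<bullet> u))"
  have G: "F (x + t *\<^sub>R u) = F x + 2 * t * \<beta> + t^2 * \<alpha>" for t
  proof -
    have "F (x + t *\<^sub>R u) = (\<Sum>i\<in>S. \<Sum>j<r i. (A i j \<bullet> x - b i j)^2
          + 2 * t * ((A i j \<bullet> x - b i j) * (A i j \<bullet> u)) + t^2 * (A i j \<bullet> u)^2)"
      unfolding F_def by (intro sum.cong refl) (simp add: inner_add_right power2_eq_square algebra_simps)
    also have "\<dots> = F x + 2 * t * \<beta> + t^2 * \<alpha>"
      by (simp add: F_def \<alpha>_def \<beta>_def sum.distrib sum_distrib_left)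
    finally show ?thesis .
  qed
  have m1: "F x \<le> F y" for y using x by (simp add: agg_argmin_def cost_eq F_def)
  have m2: "F (x + u) \<le> F y" for y using xu by (simp add: agg_argmin_def cost_eq F_def)
  have "F (x + 1 *\<^sub>R u) \<le> F x" using m2 by simp
  hence e1: "2 * \<beta> + \<alpha> \<le> 0" using G[of 1] by simp
  have "F x \<le> F (x + (1/2) *\<^sub>R u)" by (rule m1)
  hence e2: "0 \<le> \<beta> + \<alpha> / 4" using G[of "1/2"] by (simp add: power2_eq_square)
  have "\<alpha> \<le> 0" using e1 e2 by linarith
  moreover have "\<alpha> \<ge> 0" unfolding \<alpha>_def by (intro sum_nonneg) auto
  ultimately have a0: "(\<Sum>i\<in>S. \<Sum>j<r i. (A i j \<bullet> u)^2) = 0" unfolding \<alpha>_def by linarith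
  show ?thesis
  proof (intro INT_I)
    fix i assume i: "i \<in> S"
    have "\<forall>j<r i. A i j \<bullet> u = 0"
    proof (intro allI impI)
      fix j assume j: "j < r i"
      have "(\<Sum>j<r i. (A i j \<bullet> u)^2) = 0"
        using a0 fin i by (subst (asm) sum_nonneg_eq_0_iff) (auto intro: sum_nonneg)
      hence "(A i j \<bullet> u)^2 = 0" using j by (subst (asm) sum_nonneg_eq_0_iff) auto
      thus "A i j \<bullet> u = 0" by simp
    qed
    thus "u \<in> agent_ker r A i" by (simp add: agent_ker_def matvec_def)
  qed
qed

theorem lemma4:
  fixes n k :: nat and r :: "nat \<Rightarrow> nat"
    and A :: "nat \<Rightarrow> nat \<Rightarrow> real^'d" and b :: "nat \<Rightarrow> nat \<Rightarrow> real"
  assumes "k < n"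
    and "k_redundant n k r A b"
    and "(\<Inter>i\<in>{1..n}. agent_ker r A i) = {0}"
  shows "\<forall>S. S \<subseteq> {1..n} \<and> card S \<ge> n - k \<longrightarrow> (\<Inter>i\<in>S. agent_ker r A i) = {0}"
proof (intro allI impI)
  fix S assume S: "S \<subseteq> {1..n} \<and> card S \<ge> n - k"
  obtain S0 where S0: "S0 \<subseteq> S" "card S0 = n - k" "finite S0"
    using S obtain_subset_with_card_n by metis
  have S0n: "S0 \<subseteq> {1..n}" using S0 S by blast
  have zero: "0 \<in> agent_ker r A i" for i by (simp add: agent_ker_def matvec_def)
  have "u = 0" if u: "u \<in> (\<Inter>i\<in>S. agent_ker r A i)" for u
  proof -
    have uS0: "u \<in> (\<Inter>i\<in>S0. agent_ker r A i)" using u S0(1) by blast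
    obtain x where x: "x \<in> agg_argmin r A b S0" using argmin_ex[OF S0(3)] by blast
    have xu: "x + u \<in> agg_argmin r A b S0" by (rule shift_in[OF x uS0])
    have "u \<in> agent_ker r A i" if i: "i \<in> {1..n}" for i
    proof -
      have "n - k - 1 \<le> card ({1..n} - {i})" using i by simp
      then obtain T' where T': "T' \<subseteq> {1..n} - {i}" "card T' = n - k - 1" "finite T'"
        using obtain_subset_with_card_n by metis
      define T where "T = insert i T'"
      have Tn: "T \<subseteq> {1..n}" using T' i by (auto simp: T_def)
      have "i \<notin> T'" using T' by blast
      hence cT: "card T = n - k" using T' assms(1) by (simp add: T_def)
      have fT: "finite T" using T' by (simp add: T_def)
      have eq: "agg_argmin r A b S0 = agg_argmin r A b T"
        using assms(2) S0n Tn cT S0(2) unfolding k_redundant_def by blast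
      have "u \<in> (\<Inter>i\<in>T. agent_ker r A i)"
        by (rule shift_out[OF fT]) (use x xu eq in auto)
      thus ?thesis by (auto simp: T_def)
    qed
    hence "u \<in> (\<Inter>i\<in>{1..n}. agent_ker r A i)" by blast
    thus ?thesis using assms(3) by blast
  qed
  thus "(\<Inter>i\<in>S. agent_ker r A i) = {0}" using zero by blast
qed

end
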